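(* Let $f:\mathbb{R}^d\to\mathbb{R}$ be convex and $L$-smooth (differentiable with $\|\nabla f(x)-\nabla f(y)\|\le L\|x-y\|$), and let $x_*$ be a minimizer of $f$. Consider the iterate-averaging form of Nesterov's method: $z_0=x_0\in\mathbb{R}^d$ and for $k\ge 0$ $$y_k=(1-c_{k+1})x_k+c_{k+1}z_k,\qquad z_{k+1}=z_k-\rho_k\nabla f(y_k),\qquad x_{k+1}=(1-c_{k+1})x_k+c_{k+1}z_{k+1},$$ with $c_{k+1}=\frac{2}{k+2}$ and $\rho_k=\frac{k+1}{2L}$. Then for every $n\ge 1$, $$f(x_n)-f(x_* )\le\frac{2L}{n^{\overline{2}}}\|x_0-x_*\|^2,$$ where $n^{\overline 2}=n(n+1)$. *)

theory Defs
  imports "HOL-Analysis.Analysis"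
begin

definition nest_c :: "nat \<Rightarrow> real" where
  "nest_c k = 2 / (real k + 2)"   \<comment> \<open>this is c_{k+1}\<close>

definition nest_rho :: "real \<Rightarrow> nat \<Rightarrow> real" where
  "nest_rho L k = (real k + 1) / (2 * L)"

definition nest_y :: "real \<Rightarrow> nat \<Rightarrow> 'a::real_vector \<Rightarrow> 'a \<Rightarrow> 'a" where
  "nest_y L k x z = (1 - nest_c k) *\<^sub>R x + nest_c k *\<^sub>R z"

fun nesterov :: "('a::real_vector \<Rightarrow> 'a) \<Rightarrow> real \<Rightarrow> 'a \<Rightarrow> nat \<Rightarrow> 'a \<times> 'a" where
  "nesterov g L x0 0 = (x0, x0)"
| "nesterov g L x0 (Suc k) =
     (let (x, z) = nesterov g L x0 k;
          y = nest_y L k x z;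
          z' = z - nest_rho L k *\<^sub>R g y;
          x' = (1 - nest_c k) *\<^sub>R x + nest_c k *\<^sub>R z'
      in (x', z'))"

end

theory Submission
  imports Defs
begin

lemma conv_grad:
  fixes f :: "'a::euclidean_space \<Rightarrow> real" and grad :: "'a \<Rightarrow> 'a"
  assumes convex: "convex_on UNIV f"
    and grad: "\<And>x. (f has_derivative (\<lambda>h. grad x \<bullet> h)) (at x)"
  shows "f y + grad y \<bullet> (x - y) \<le> f x"
proof -
  define d where "d = x - y"
  define h where "h t = f (y + t *\<^sub>R d)" for t :: real
  have hc: "convex_on UNIV h"
  proof (rule convex_onI)
    fix t a b :: real assume t: "0 < t" "t < 1"
    have "y + ((1 - t) *\<^sub>R a + t *\<^sub>R b) *\<^sub>R d = (1 - t) *\<^sub>R (y + a *\<^sub>R d) + t *\<^sub>R (y + b *\<^sub>R d)"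
      by (simp add: algebra_simps)
    then show "h ((1 - t) *\<^sub>R a + t *\<^sub>R b) \<le> (1 - t) * h a + t * h b"
      unfolding h_def using convex_onD[OF convex, of t "y + a *\<^sub>R d" "y + b *\<^sub>R d"] t
      by simp
  qed auto
  have l: "((\<lambda>t. y + t *\<^sub>R d) has_derivative (\<lambda>t. t *\<^sub>R d)) (at 0)"
    by (auto intro!: derivative_eq_intros)
  have "((\<lambda>t. f (y + t *\<^sub>R d)) has_derivative (\<lambda>s. s * (grad y \<bullet> d))) (at 0)"
    using has_derivative_compose[OF l grad] by simp
  then have "(h has_field_derivative (grad y \<bullet> d)) (at 0)"
    unfolding has_field_derivative_def h_def o_def
    by (simp add: mult_commute_abs)
  then have "(h has_field_derivative (grad y \<bullet> d)) (at 0 within UNIV)" by simp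
  from convex_on_imp_above_tangent[OF hc _ _ _ this, of 1]
  have "h 1 - h 0 \<ge> grad y \<bullet> d" by simp
  then show ?thesis unfolding h_def d_def by simp
qed

lemma descent:
  fixes f :: "'a::euclidean_space \<Rightarrow> real" and grad :: "'a \<Rightarrow> 'a"
  assumes grad: "\<And>x. (f has_derivative (\<lambda>h. grad x \<bullet> h)) (at x)"
    and smooth: "\<And>x y. norm (grad x - grad y) \<le> L * norm (x - y)"
  shows "f x \<le> f y + grad y \<bullet> (x - y) + L / 2 * (norm (x - y))\<^sup>2"
proof -
  define d where "d = x - y"
  define \<phi> where "\<phi> t = f (y + t *\<^sub>R d) - t * (grad y \<bullet> d) - L / 2 * t\<^sup>2 * (norm d)\<^sup>2" for t :: real
  have D: "(\<phi> has_real_derivative (grad (y + t *\<^sub>R d) \<bullet> d - grad y \<bullet> d - L * t * (norm d)\<^sup>2)) (at t)" for t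
  proof -
    have l: "((\<lambda>t. y + t *\<^sub>R d) has_derivative (\<lambda>t. t *\<^sub>R d)) (at t)"
      by (auto intro!: derivative_eq_intros)
    have "((\<lambda>t. f (y + t *\<^sub>R d)) has_derivative (\<lambda>s. s * (grad (y + t *\<^sub>R d) \<bullet> d))) (at t)"
      using has_derivative_compose[OF l grad] by simp
    then have "((\<lambda>t. f (y + t *\<^sub>R d)) has_real_derivative (grad (y + t *\<^sub>R d) \<bullet> d)) (at t)"
      unfolding has_field_derivative_def o_def by (simp add: mult_commute_abs)
    then show ?thesis unfolding \<phi>_def
      by (auto intro!: derivative_eq_intros)
  qed
  have Dn: "\<exists>D. (\<phi> has_real_derivative D) (at t) \<and> D \<le> 0" if t: "0 < t" "t < 1" for t
  proof -
    have "grad (y + t *\<^sub>R d) \<bullet> d - grad y \<bullet> d = (grad (y + t *\<^sub>R d) - grad y) \<bullet> d"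
      by (simp add: inner_diff_left)
    also have "\<dots> \<le> norm (grad (y + t *\<^sub>R d) - grad y) * norm d"
      by (rule norm_cauchy_schwarz)
    also have "\<dots> \<le> L * norm (t *\<^sub>R d) * norm d"
      using smooth[of "y + t *\<^sub>R d" y] by (simp add: mult_right_mono)
    also have "\<dots> = L * t * (norm d)\<^sup>2" using t by (simp add: power2_eq_square)
    finally show ?thesis using D by fastforce
  qed
  have "\<phi> 0 \<ge> \<phi> 1"
    apply (rule DERIV_nonpos_imp_decreasing_open[of 0 1])
    using Dn apply simp
    using Dn apply blast
    using D by (meson DERIV_isCont continuous_at_imp_continuous_on)
  then show ?thesis unfolding \<phi>_def d_def by simp
qed


lemma scalar_step:
  fixes A1 A0 a c \<rho> L G fx fx' fy fs p q r N N' :: real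
  assumes hA1c: "A1 * c = a" and hA0: "A1 * (1 - c) = A0" and h\<rho>: "\<rho> = a"
    and hLc: "L * A1 * c\<^sup>2 \<le> 1" and G: "G \<ge> 0" and A0: "A0 \<ge> 0" and a: "a \<ge> 0" and A1: "A1 \<ge> 0"
    and F1: "fx' \<le> fy - c * \<rho> * G + L / 2 * (c * \<rho>)\<^sup>2 * G"
    and F2: "fx \<ge> fy + (p - ((1 - c) * p + c * q))"
    and F3: "fs \<ge> fy + (r - ((1 - c) * p + c * q))"
    and N: "N' = N - 2 * \<rho> * (q - r) + \<rho>\<^sup>2 * G"
  shows "A1 * (fx' - fs) + N' / 2 \<le> A0 * (fx - fs) + N / 2"
proof -
  have e1: "A1 * fx' \<le> A1 * fy - a * \<rho> * G + (L * A1 * c\<^sup>2) * \<rho>\<^sup>2 * G / 2"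
  proof -
    have "A1 * fx' \<le> A1 * (fy - c * \<rho> * G + L / 2 * (c * \<rho>)\<^sup>2 * G)"
      using F1 A1 by (rule mult_left_mono)
    also have "\<dots> = A1 * fy - (A1 * c) * \<rho> * G + (L * A1 * c\<^sup>2) * \<rho>\<^sup>2 * G / 2"
      by (simp add: algebra_simps power2_eq_square)
    finally show ?thesis using hA1c by simp
  qed
  have e2: "(L * A1 * c\<^sup>2) * (\<rho>\<^sup>2 * G) \<le> 1 * (\<rho>\<^sup>2 * G)"
    using hLc G by (intro mult_right_mono) auto
  have e3: "A0 * fx \<ge> A0 * (fy + (p - ((1 - c) * p + c * q)))"
    using F2 A0 by (rule mult_left_mono)
  have e4: "a * fs \<ge> a * (fy + (r - ((1 - c) * p + c * q)))"
    using F3 a by (rule mult_left_mono)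
  have id: "A0 * (p - ((1 - c) * p + c * q)) + a * (r - ((1 - c) * p + c * q)) = a * r - a * q"
    unfolding hA0[symmetric] hA1c[symmetric] by (simp add: algebra_simps)
  have sum: "A0 + a = A1" using hA0 hA1c by (simp add: algebra_simps)
  have e3': "A0 * fx \<ge> A0 * fy + A0 * (p - ((1 - c) * p + c * q))"
    using e3 by (simp add: distrib_left)
  have e4': "a * fs \<ge> a * fy + a * (r - ((1 - c) * p + c * q))"
    using e4 by (simp add: distrib_left)
  have d1: "A1 * fs = A0 * fs + a * fs" "A1 * fy = A0 * fy + a * fy"
    using sum by (auto simp: distrib_right)
  have N2: "N' / 2 = N / 2 - a * q + a * r + a * \<rho> * G / 2"
    using N h\<rho> by (simp add: algebra_simps power2_eq_square)
  have "A1 * (fx' - fs) = A1 * fx' - A1 * fs" by (simp add: algebra_simps)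
  moreover have "A0 * (fx - fs) = A0 * fx - A0 * fs" by (simp add: algebra_simps)
  moreover have "a * \<rho> * G = \<rho>\<^sup>2 * G" using h\<rho> by (simp add: power2_eq_square)
  ultimately show ?thesis
    using e1 e2 e3' e4' id d1 N2 by linarith
qed


lemma invariant:
  fixes f :: "'a::euclidean_space \<Rightarrow> real"
    and grad :: "'a \<Rightarrow> 'a"
    and L :: real and x0 xs :: 'a and k :: nat
  assumes L_pos: "L > 0"
    and convex: "convex_on UNIV f"
    and grad: "\<And>x. (f has_derivative (\<lambda>h. grad x \<bullet> h)) (at x)"
    and smooth: "\<And>x y. norm (grad x - grad y) \<le> L * norm (x - y)"
  shows "real k * (real k + 1) / (4 * L) * (f (fst (nesterov grad L x0 k)) - f xs)
     + (norm (snd (nesterov grad L x0 k) - xs))\<^sup>2 / 2 \<le> (norm (x0 - xs))\<^sup>2 / 2"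
proof (induction k)
  case 0
  then show ?case by simp
next
  case (Suc k)
  obtain x z where xz: "nesterov grad L x0 k = (x, z)" by (cases "nesterov grad L x0 k")
  define c where "c = nest_c k"
  define \<rho> where "\<rho> = nest_rho L k"
  define y where "y = (1 - c) *\<^sub>R x + c *\<^sub>R z"
  define g where "g = grad y"
  define z' where "z' = z - \<rho> *\<^sub>R g"
  define x' where "x' = (1 - c) *\<^sub>R x + c *\<^sub>R z'"
  have nS: "nesterov grad L x0 (Suc k) = (x', z')"
    using xz by (simp add: Let_def x'_def z'_def g_def y_def c_def \<rho>_def nest_y_def)
  define K where "K = real k"
  have K: "K \<ge> 0" unfolding K_def by simp
  define A1 where "A1 = (K + 1) * (K + 2) / (4 * L)"
  define A0 where "A0 = K * (K + 1) / (4 * L)"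
  define a where "a = (K + 1) / (2 * L)"
  have cK: "c = 2 / (K + 2)" unfolding c_def nest_c_def K_def by simp
  have \<rho>K: "\<rho> = a" unfolding \<rho>_def nest_rho_def a_def K_def by simp
  have K2: "K + 2 \<noteq> 0" using K by simp
  have hA1c: "A1 * c = a" unfolding A1_def a_def cK using K2 L_pos
    by (simp add: divide_simps)
  have hA0: "A1 * (1 - c) = A0" unfolding A1_def A0_def cK using K2 L_pos
    by (simp add: divide_simps)
  have "L * A1 * c\<^sup>2 = (K + 1) / (K + 2)" unfolding A1_def cK using K2 L_pos
    by (simp add: divide_simps power2_eq_square)
  then have hLc: "L * A1 * c\<^sup>2 \<le> 1" using K by simp
  have F1: "f x' \<le> f y - c * \<rho> * (g \<bullet> g) + L / 2 * (c * \<rho>)\<^sup>2 * (g \<bullet> g)"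
  proof -
    have xy: "x' - y = - (c * \<rho>) *\<^sub>R g"
      unfolding x'_def y_def z'_def by (simp add: algebra_simps)
    have n2: "(norm (x' - y))\<^sup>2 = (c * \<rho>)\<^sup>2 * (g \<bullet> g)"
      unfolding xy by (simp add: power_mult_distrib power2_norm_eq_inner[symmetric])
    have "f x' \<le> f y + grad y \<bullet> (x' - y) + L / 2 * (norm (x' - y))\<^sup>2"
      by (rule descent[OF grad smooth])
    also have "\<dots> = f y - c * \<rho> * (g \<bullet> g) + L / 2 * (c * \<rho>)\<^sup>2 * (g \<bullet> g)"
      unfolding n2 unfolding xy g_def[symmetric] by simp
    finally show ?thesis .
  qed
  have gy: "g \<bullet> y = (1 - c) * (g \<bullet> x) + c * (g \<bullet> z)"
    unfolding y_def by (simp add: inner_add_right)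
  have F2: "f x \<ge> f y + (g \<bullet> x - ((1 - c) * (g \<bullet> x) + c * (g \<bullet> z)))"
    using conv_grad[OF convex grad, of y x] gy unfolding g_def by (simp add: inner_diff_right)
  have F3: "f xs \<ge> f y + (g \<bullet> xs - ((1 - c) * (g \<bullet> x) + c * (g \<bullet> z)))"
    using conv_grad[OF convex grad, of y xs] gy unfolding g_def by (simp add: inner_diff_right)
  have N: "(norm (z' - xs))\<^sup>2 = (norm (z - xs))\<^sup>2 - 2 * \<rho> * (g \<bullet> z - g \<bullet> xs) + \<rho>\<^sup>2 * (g \<bullet> g)"
  proof -
    define w where "w = z - xs"
    have "z' - xs = w - \<rho> *\<^sub>R g" unfolding z'_def w_def by simp
    then have "(norm (z' - xs))\<^sup>2 = (w - \<rho> *\<^sub>R g) \<bullet> (w - \<rho> *\<^sub>R g)"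
      by (simp add: power2_norm_eq_inner)
    also have "\<dots> = w \<bullet> w - 2 * \<rho> * (g \<bullet> w) + \<rho>\<^sup>2 * (g \<bullet> g)"
      by (simp add: inner_diff_left inner_diff_right inner_commute power2_eq_square algebra_simps)
    also have "w \<bullet> w = (norm (z - xs))\<^sup>2" unfolding w_def by (simp add: power2_norm_eq_inner)
    also have "g \<bullet> w = g \<bullet> z - g \<bullet> xs" unfolding w_def by (simp add: inner_diff_right)
    finally show ?thesis .
  qed
  have A0pos: "A0 \<ge> 0" unfolding A0_def using K L_pos by simp
  have apos: "a \<ge> 0" unfolding a_def using K L_pos by simp
  have A1pos: "A1 \<ge> 0" unfolding A1_def using K L_pos by simp
  have step: "A1 * (f x' - f xs) + (norm (z' - xs))\<^sup>2 / 2 \<le> A0 * (f x - f xs) + (norm (z - xs))\<^sup>2 / 2"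
    by (rule scalar_step[OF hA1c hA0 \<rho>K hLc inner_ge_zero A0pos apos A1pos F1 F2 F3 N])
  have IH: "A0 * (f x - f xs) + (norm (z - xs))\<^sup>2 / 2 \<le> (norm (x0 - xs))\<^sup>2 / 2"
    using Suc.IH xz unfolding A0_def K_def by simp
  have A1eq: "A1 = real (Suc k) * (real (Suc k) + 1) / (4 * L)"
    unfolding A1_def K_def by (simp add: algebra_simps)
  show ?case unfolding nS fst_conv snd_conv A1eq[symmetric] using step IH by linarith
qed

theorem theorem5:
  fixes f :: "'a::euclidean_space \<Rightarrow> real"
    and grad :: "'a \<Rightarrow> 'a"
    and L :: real and x0 xs :: 'a and n :: nat
  assumes L_pos: "L > 0"
    and convex: "convex_on UNIV f"
    and grad: "\<And>x. (f has_derivative (\<lambda>h. grad x \<bullet> h)) (at x)"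
    and smooth: "\<And>x y. norm (grad x - grad y) \<le> L * norm (x - y)"
    and minimizer: "\<And>x. f xs \<le> f x"
    and n: "n \<ge> 1"
  shows "f (fst (nesterov grad L x0 n)) - f xs
           \<le> 2 * L / (real n * (real n + 1)) * (norm (x0 - xs))\<^sup>2"
proof -
  define A where "A = real n * (real n + 1) / (4 * L)"
  have Apos: "A > 0" unfolding A_def using n L_pos by simp
  have "A * (f (fst (nesterov grad L x0 n)) - f xs) \<le> (norm (x0 - xs))\<^sup>2 / 2"
    using invariant[OF L_pos convex grad smooth, of n x0 xs] unfolding A_def
    by (smt (verit) zero_le_power2 divide_nonneg_pos)
  then have "f (fst (nesterov grad L x0 n)) - f xs \<le> (norm (x0 - xs))\<^sup>2 / 2 / A"
    using Apos by (simp add: field_simps mult.commute)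
  also have "\<dots> = 2 * L / (real n * (real n + 1)) * (norm (x0 - xs))\<^sup>2"
    unfolding A_def using n L_pos by (simp add: field_simps)
  finally show ?thesis .
qed

end
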